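(* Let $\mathcal{X}$ be a feature space and $\mathcal{Y}=\{+1,-1\}$. Let $p(\boldsymbol{x},y)$ be a joint density on $\mathcal{X}\times\mathcal{Y}$ with class priors $\pi_+=p(y=+1)$, $\pi_-=p(y=-1)=1-\pi_+$ and class-conditional densities $p_+(\boldsymbol{x})=p(\boldsymbol{x}\mid y=+1)$, $p_-(\boldsymbol{x})=p(\boldsymbol{x}\mid y=-1)$. Suppose pairwise comparison data are generated as follows: two labeled examples $(\boldsymbol{x},y)$ and $(\boldsymbol{x}',y')$ are drawn independently from $p(\boldsymbol{x},y)$, and the unlabeled pair $(\boldsymbol{x},\boldsymbol{x}')$ is collected as a pairwise comparison if and only if $(y,y')\in\{(+1,+1),(+1,-1),(-1,-1)\}$; the dataset $\widetilde{\mathcal{D}}=\{(\boldsymbol{x}_i,\boldsymbol{x}_i')\}_{i=1}^n$ consists of $n$ independently collected such pairs. Let $$q(\boldsymbol{x},\boldsymbol{x}')=\pi_+^2p_+(\boldsymbol{x})p_+(\boldsymbol{x}')+\pi_-^2p_-(\boldsymbol{x})p_-(\boldsymbol{x}')+\pi_+\pi_-p_+(\boldsymbol{x})p_-(\boldsymbol{x}'),\qquad \widetilde{p}(\boldsymbol{x},\boldsymbol{x}')=\frac{q(\boldsymbol{x},\boldsymbol{x}')}{\pi_+^2+\pi_-^2+\pi_+\pi_-}.$$ Then the collected pairs are independently drawn from $\widetilde{p}(\boldsymbol{x},\boldsymbol{x}')$, i.e. $\widetilde{\mathcal{D}}\stackrel{\mathrm{i.i.d.}}{\sim}\widetilde{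p}(\boldsymbol{x},\boldsymbol{x}')$.
   Context: The true labels $y,y'$ are never observed by the learner; only the pair $(\boldsymbol{x},\boldsymbol{x}')$ is recorded. The density of a collected pair is the conditional density of $(\boldsymbol{x},\boldsymbol{x}')$ given the event $(y,y')\in\{(+1,+1),(+1,-1),(-1,-1)\}$. *)

theory Defs
  imports "HOL-Probability.Probability"
begin

text \<open>Labels: \<open>Y = {+1,-1}\<close> rendered as the integers 1 and -1.
  \<open>pip\<close> is the class prior \<open>\<pi>_+\<close>; \<open>\<pi>_- = 1 - pip\<close>.
  \<open>pp\<close>, \<open>pn\<close> are the class-conditional densities w.r.t. the base measure \<open>M\<close>
  on the feature space.\<close>

definition label_space :: "int measure" where
  "label_space = count_space {1, -1}"

definition q_dens :: "real \<Rightarrow> ('a \<Rightarrow> real) \<Rightarrow> ('a \<Rightarrow> real) \<Rightarrow> 'a \<Rightarrow> 'a \<Rightarrow> real" where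
  "q_dens pip pp pn x x' =
     pip^2 * pp x * pp x' + (1 - pip)^2 * pn x * pn x' + pip * (1 - pip) * pp x * pn x'"

definition ptilde :: "real \<Rightarrow> ('a \<Rightarrow> real) \<Rightarrow> ('a \<Rightarrow> real) \<Rightarrow> 'a \<Rightarrow> 'a \<Rightarrow> real" where
  "ptilde pip pp pn x x' =
     q_dens pip pp pn x x' / (pip^2 + (1 - pip)^2 + pip * (1 - pip))"

definition joint_law :: "'a measure \<Rightarrow> real \<Rightarrow> ('a \<Rightarrow> real) \<Rightarrow> ('a \<Rightarrow> real) \<Rightarrow> ('a \<times> int) measure" where
  "joint_law M pip pp pn =
     density (M \<Otimes>\<^sub>M label_space)
       (\<lambda>(x, y). ennreal (if y = 1 then pip * pp x else (1 - pip) * pn x))"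

definition two_draws :: "'a measure \<Rightarrow> real \<Rightarrow> ('a \<Rightarrow> real) \<Rightarrow> ('a \<Rightarrow> real) \<Rightarrow> (('a \<times> int) \<times> ('a \<times> int)) measure" where
  "two_draws M pip pp pn = joint_law M pip pp pn \<Otimes>\<^sub>M joint_law M pip pp pn"

definition collect_event :: "'a measure \<Rightarrow> real \<Rightarrow> ('a \<Rightarrow> real) \<Rightarrow> ('a \<Rightarrow> real) \<Rightarrow> (('a \<times> int) \<times> ('a \<times> int)) set" where
  "collect_event M pip pp pn =
     space (two_draws M pip pp pn) \<inter>
     {((x, y), (x', y')). (y, y') \<in> {(1, 1), (1, -1), (-1, -1)}}"

definition collected_pair_law :: "'a measure \<Rightarrow> real \<Rightarrow> ('a \<Rightarrow> real) \<Rightarrow> ('a \<Rightarrow> real) \<Rightarrow> ('a \<times> 'a) measure" where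
  "collected_pair_law M pip pp pn =
     distr (uniform_measure (two_draws M pip pp pn) (collect_event M pip pp pn))
           (M \<Otimes>\<^sub>M M) (\<lambda>((x, y), (x', y')). (x, x'))"

definition dataset_law :: "'a measure \<Rightarrow> real \<Rightarrow> ('a \<Rightarrow> real) \<Rightarrow> ('a \<Rightarrow> real) \<Rightarrow> nat \<Rightarrow> (nat \<Rightarrow> 'a \<times> 'a) measure" where
  "dataset_law M pip pp pn n = PiM {..<n} (\<lambda>_. collected_pair_law M pip pp pn)"

end

theory Submission
  imports Defs
begin

definition fL :: "real \<Rightarrow> ('a \<Rightarrow> real) \<Rightarrow> ('a \<Rightarrow> real) \<Rightarrow> 'a \<times> int \<Rightarrow> ennreal" where
  "fL pip pp pn = (\<lambda>(x, y). ennreal (if y = (1::int) then pip * pp x else (1 - pip) * pn x))"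

lemma fmeas:
  assumes "pp \<in> borel_measurable M" "pn \<in> borel_measurable M"
  shows "fL pip pp pn \<in> borel_measurable (M \<Otimes>\<^sub>M label_space)"
  using assms unfolding label_space_def fL_def by measurable

lemma N_sf:
  assumes "sigma_finite_measure M"
  shows "sigma_finite_measure (M \<Otimes>\<^sub>M label_space)"
  by (rule sigma_finite_pair_measure[OF assms(1)]) (simp add: label_space_def sigma_finite_measure_count_space_finite)

lemma J_sf:
  assumes "sigma_finite_measure M" "pp \<in> borel_measurable M" "pn \<in> borel_measurable M"
  shows "sigma_finite_measure (joint_law M pip pp pn)"
proof -
  interpret N: sigma_finite_measure "M \<Otimes>\<^sub>M label_space" by (rule N_sf[OF assms(1)])
  show ?thesis unfolding joint_law_def fL_def[symmetric]
    by (subst N.sigma_finite_iff_density_finite'[OF fmeas[OF assms(2,3)]]) (auto simp: fL_def)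
qed

lemma int_N:
  assumes "sigma_finite_measure M" "g \<in> borel_measurable (M \<Otimes>\<^sub>M label_space)"
  shows "(\<integral>\<^sup>+ z. g z \<partial>(M \<Otimes>\<^sub>M label_space)) = (\<integral>\<^sup>+ x. (\<Sum>y\<in>{1,-1}. g (x, y)) \<partial>M)"
proof -
  interpret L: sigma_finite_measure label_space
    by (simp add: label_space_def sigma_finite_measure_count_space_finite)
  have "(\<integral>\<^sup>+ z. g z \<partial>(M \<Otimes>\<^sub>M label_space)) = (\<integral>\<^sup>+ x. \<integral>\<^sup>+ y. g (x, y) \<partial>label_space \<partial>M)"
    by (rule L.nn_integral_fst[symmetric, OF assms(2)])
  also have "\<dots> = (\<integral>\<^sup>+ x. (\<Sum>y\<in>{1,-1}. g (x, y)) \<partial>M)"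
    by (simp add: label_space_def nn_integral_count_space_finite)
  finally show ?thesis .
qed

lemma TD_int:
  assumes sf: "sigma_finite_measure M" and mp: "pp \<in> borel_measurable M" and mn: "pn \<in> borel_measurable M"
    and h: "h \<in> borel_measurable ((M \<Otimes>\<^sub>M label_space) \<Otimes>\<^sub>M (M \<Otimes>\<^sub>M label_space))"
  shows "(\<integral>\<^sup>+ z. h z \<partial>two_draws M pip pp pn) =
    (\<integral>\<^sup>+ x. (\<Sum>y\<in>{1,-1}. fL pip pp pn (x,y) * (\<integral>\<^sup>+ x'. (\<Sum>y'\<in>{1,-1}. fL pip pp pn (x',y') * h ((x,y),(x',y'))) \<partial>M)) \<partial>M)"
proof -
  let ?N = "M \<Otimes>\<^sub>M label_space"
  let ?J = "joint_law M pip pp pn"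
  let ?f = "fL pip pp pn"
  interpret J: sigma_finite_measure ?J by (rule J_sf[OF sf mp mn])
  have fm: "?f \<in> borel_measurable ?N" by (rule fmeas[OF mp mn])
  have J: "?J = density ?N ?f" unfolding joint_law_def fL_def ..
  have sJ: "sets ?J = sets ?N" by (simp add: J)
  have hJ: "h \<in> borel_measurable (?J \<Otimes>\<^sub>M ?J)"
    using h by (simp cong: measurable_cong_sets add: sets_pair_measure_cong[OF sJ sJ])
  have "(\<integral>\<^sup>+ z. h z \<partial>two_draws M pip pp pn) = (\<integral>\<^sup>+ a. \<integral>\<^sup>+ b. h (a, b) \<partial>?J \<partial>?J)"
    unfolding two_draws_def by (rule J.nn_integral_fst[symmetric, OF hJ])
  also have "\<dots> = (\<integral>\<^sup>+ a. ?f a * (\<integral>\<^sup>+ b. ?f b * h (a, b) \<partial>?N) \<partial>?N)"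
  proof -
    have Gm: "(\<lambda>a. \<integral>\<^sup>+ b. h (a, b) \<partial>?J) \<in> borel_measurable ?N"
      using J.borel_measurable_nn_integral_fst[OF hJ] by (simp cong: measurable_cong_sets add: sJ)
    have "(\<integral>\<^sup>+ a. \<integral>\<^sup>+ b. h (a, b) \<partial>?J \<partial>?J) = (\<integral>\<^sup>+ a. ?f a * (\<integral>\<^sup>+ b. h (a, b) \<partial>?J) \<partial>?N)"
      using nn_integral_density[OF fm Gm, folded J] by simp
    also have "\<dots> = (\<integral>\<^sup>+ a. ?f a * (\<integral>\<^sup>+ b. ?f b * h (a, b) \<partial>?N) \<partial>?N)"
    proof (rule nn_integral_cong)
      fix a assume a: "a \<in> space ?N"
      have "(\<lambda>b. h (a, b)) \<in> borel_measurable ?N"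
        using h a by measurable
      then show "?f a * (\<integral>\<^sup>+ b. h (a, b) \<partial>?J) = ?f a * (\<integral>\<^sup>+ b. ?f b * h (a, b) \<partial>?N)"
        by (subst J, subst nn_integral_density[OF fm]) simp_all
    qed
    finally show ?thesis .
  qed
  also have "\<dots> = (\<integral>\<^sup>+ x. (\<Sum>y\<in>{1,-1}. ?f (x,y) * (\<integral>\<^sup>+ b. ?f b * h ((x,y), b) \<partial>?N)) \<partial>M)"
  proof (rule int_N[OF sf])
    interpret N: sigma_finite_measure ?N by (rule N_sf[OF sf])
    have "(\<lambda>(a, b). ?f b * h (a, b)) \<in> borel_measurable (?N \<Otimes>\<^sub>M ?N)"
      using h fm by measurable
    from N.borel_measurable_nn_integral_fst[OF this] fm
    show "(\<lambda>a. ?f a * (\<integral>\<^sup>+ b. ?f b * h (a, b) \<partial>?N)) \<in> borel_measurable ?N"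
      by simp
  qed
  also have "\<dots> = (\<integral>\<^sup>+ x. (\<Sum>y\<in>{1,-1}. ?f (x,y) * (\<integral>\<^sup>+ x'. (\<Sum>y'\<in>{1,-1}. ?f (x',y') * h ((x,y),(x',y'))) \<partial>M)) \<partial>M)"
  proof (rule nn_integral_cong)
    fix x assume x: "x \<in> space M"
    have "\<And>y. y \<in> {1,-1} \<Longrightarrow> (\<integral>\<^sup>+ b. ?f b * h ((x,y), b) \<partial>?N) = (\<integral>\<^sup>+ x'. (\<Sum>y'\<in>{1,-1}. ?f (x',y') * h ((x,y),(x',y'))) \<partial>M)"
    proof -
      fix y :: int assume y: "y \<in> {1,-1}"
      have xy: "(x, y) \<in> space ?N" using x y by (simp add: space_pair_measure label_space_def)
      have "(\<lambda>b. ?f b * h ((x,y), b)) \<in> borel_measurable ?N"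
        using h fm xy by measurable
      then show "?thesis y" by (rule int_N[OF sf])
    qed
    then show "(\<Sum>y\<in>{1,-1}. ?f (x,y) * (\<integral>\<^sup>+ b. ?f b * h ((x,y), b) \<partial>?N)) = (\<Sum>y\<in>{1,-1}. ?f (x,y) * (\<integral>\<^sup>+ x'. (\<Sum>y'\<in>{1,-1}. ?f (x',y') * h ((x,y),(x',y'))) \<partial>M))"
      by (intro sum.cong) auto
  qed
  finally show ?thesis .
qed

lemma sets_TD: "sets (two_draws M pip pp pn) = sets ((M \<Otimes>\<^sub>M label_space) \<Otimes>\<^sub>M (M \<Otimes>\<^sub>M label_space))"
  unfolding two_draws_def joint_law_def
  by (intro sets_pair_measure_cong) simp_all

lemma space_TD: "space (two_draws M pip pp pn) = (space M \<times> {1,-1}) \<times> (space M \<times> {1,-1})"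
  unfolding two_draws_def joint_law_def by (simp add: space_pair_measure label_space_def)

lemma pi_meas: "(\<lambda>((x, y), x', y'). (x, x')) \<in> measurable (two_draws M pip pp pn) (M \<Otimes>\<^sub>M M)"
proof -
  have e: "(\<lambda>((x, y), x', y'). (x, x')) = (\<lambda>z::('a \<times> int) \<times> ('a \<times> int). (fst (fst z), fst (snd z)))" by auto
  show ?thesis unfolding e by (subst measurable_cong_sets[OF sets_TD refl]) measurable
qed

lemma C_sets: "collect_event M pip pp pn \<in> sets (two_draws M pip pp pn)"
proof -
  have "collect_event M pip pp pn = ((space M \<times> {1}) \<times> (space M \<times> {1})) \<union> ((space M \<times> {1}) \<times> (space M \<times> {-1})) \<union> ((space M \<times> {-1}) \<times> (space M \<times> {-1}))"
    unfolding collect_event_def space_TD by auto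
  also have "\<dots> \<in> sets (two_draws M pip pp pn)"
    unfolding sets_TD by (intro sets.Un pair_measureI) (auto simp: label_space_def)
  finally show ?thesis .
qed


lemma pointwise:
  assumes "0 \<le> pip" "pip \<le> 1" "0 \<le> pp x" "0 \<le> pn x" "0 \<le> pp x'" "0 \<le> pn x'"
    and x: "x \<in> space M" and x': "x' \<in> space M"
  shows "(\<Sum>y\<in>{1,-1}. fL pip pp pn (x,y) * (\<Sum>y'\<in>{1,-1}. fL pip pp pn (x',y') *
            indicator (collect_event M pip pp pn \<inter> ((\<lambda>((x, y), x', y'). (x, x')) -` A \<inter> space (two_draws M pip pp pn))) ((x,y),(x',y'))))
         = ennreal (q_dens pip pp pn x x') * indicator A (x, x')"
proof (cases "(x,x') \<in> A")
  case True
  have "(\<Sum>y\<in>{1,-1}. fL pip pp pn (x,y) * (\<Sum>y'\<in>{1,-1}. fL pip pp pn (x',y') *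
            indicator (collect_event M pip pp pn \<inter> ((\<lambda>((x, y), x', y'). (x, x')) -` A \<inter> space (two_draws M pip pp pn))) ((x,y),(x',y'))))
     = ennreal (pip * pp x) * (ennreal (pip * pp x') + ennreal ((1 - pip) * pn x')) + ennreal ((1 - pip) * pn x) * ennreal ((1 - pip) * pn x')"
    using True x x' by (simp add: fL_def collect_event_def space_TD indicator_def)
  also have "\<dots> = ennreal (pip * pp x * (pip * pp x' + (1 - pip) * pn x') + (1 - pip) * pn x * ((1 - pip) * pn x'))"
    using assms by (simp add: ennreal_mult ennreal_plus)
  also have "\<dots> = ennreal (q_dens pip pp pn x x')"
    by (simp add: q_dens_def power2_eq_square algebra_simps)
  finally show ?thesis using True by simp
next
  case False
  then show ?thesis by (simp add: indicator_def)
qed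


lemma Qlemma:
  assumes sf: "sigma_finite_measure M" and mp: "pp \<in> borel_measurable M" and mn: "pn \<in> borel_measurable M"
    and p0: "0 \<le> pip" and p1: "pip \<le> 1"
    and pp0: "\<And>x. x \<in> space M \<Longrightarrow> 0 \<le> pp x" and pn0: "\<And>x. x \<in> space M \<Longrightarrow> 0 \<le> pn x"
    and A: "A \<in> sets (M \<Otimes>\<^sub>M M)"
  shows "emeasure (two_draws M pip pp pn) (collect_event M pip pp pn \<inter> ((\<lambda>((x, y), x', y'). (x, x')) -` A \<inter> space (two_draws M pip pp pn)))
    = (\<integral>\<^sup>+ z. ennreal (q_dens pip pp pn (fst z) (snd z)) * indicator A z \<partial>(M \<Otimes>\<^sub>M M))"
proof -
  let ?B = "collect_event M pip pp pn \<inter> ((\<lambda>((x, y), x', y'). (x, x')) -` A \<inter> space (two_draws M pip pp pn))"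
  let ?f = "fL pip pp pn"
  let ?N = "M \<Otimes>\<^sub>M label_space"
  have Bs: "?B \<in> sets (two_draws M pip pp pn)"
    by (intro sets.Int C_sets measurable_sets[OF pi_meas A])
  have Bs': "?B \<in> sets (?N \<Otimes>\<^sub>M ?N)" using Bs sets_TD by metis
  have hm: "indicator ?B \<in> borel_measurable (?N \<Otimes>\<^sub>M ?N)" using Bs' by simp
  have fm: "?f \<in> borel_measurable ?N" by (rule fmeas[OF mp mn])
  have "emeasure (two_draws M pip pp pn) ?B = (\<integral>\<^sup>+ z. indicator ?B z \<partial>two_draws M pip pp pn)"
    using Bs by simp
  also have "\<dots> = (\<integral>\<^sup>+ x. (\<Sum>y\<in>{1,-1}. ?f (x,y) * (\<integral>\<^sup>+ x'. (\<Sum>y'\<in>{1,-1}. ?f (x',y') * indicator ?B ((x,y),(x',y'))) \<partial>M)) \<partial>M)"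
    by (rule TD_int[OF sf mp mn hm])
  also have "\<dots> = (\<integral>\<^sup>+ x. \<integral>\<^sup>+ x'. ennreal (q_dens pip pp pn x x') * indicator A (x, x') \<partial>M \<partial>M)"
  proof (rule nn_integral_cong)
    fix x assume x: "x \<in> space M"
    have inm: "(\<lambda>x'. \<Sum>y'\<in>{1,-1}. ?f (x',y') * indicator ?B ((x,y),(x',y'))) \<in> borel_measurable M"
      if y: "y \<in> {1,-1}" for y :: int
    proof (rule borel_measurable_sum)
      fix y' :: int assume y': "y' \<in> {1,-1}"
      have "(\<lambda>x'. (x', y')) \<in> measurable M ?N" using y' by (simp add: label_space_def)
      moreover have "(\<lambda>x'. ((x, y), (x', y'))) \<in> measurable M (?N \<Otimes>\<^sub>M ?N)"
        using x y y' by (simp add: label_space_def)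
      ultimately show "(\<lambda>x'. ?f (x',y') * indicator ?B ((x,y),(x',y'))) \<in> borel_measurable M"
        using fm hm by (intro borel_measurable_times_ennreal) (erule measurable_compose, assumption)+
    qed
    have "(\<Sum>y\<in>{1,-1}. ?f (x,y) * (\<integral>\<^sup>+ x'. (\<Sum>y'\<in>{1,-1}. ?f (x',y') * indicator ?B ((x,y),(x',y'))) \<partial>M))
        = (\<Sum>y\<in>{1,-1}. (\<integral>\<^sup>+ x'. ?f (x,y) * (\<Sum>y'\<in>{1,-1}. ?f (x',y') * indicator ?B ((x,y),(x',y'))) \<partial>M))"
      by (intro sum.cong refl nn_integral_cmult[symmetric] inm)
    also have "\<dots> = (\<integral>\<^sup>+ x'. (\<Sum>y\<in>{1,-1}. ?f (x,y) * (\<Sum>y'\<in>{1,-1}. ?f (x',y') * indicator ?B ((x,y),(x',y')))) \<partial>M)"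
      by (intro nn_integral_sum[symmetric] borel_measurable_times_ennreal borel_measurable_const inm)
    also have "\<dots> = (\<integral>\<^sup>+ x'. ennreal (q_dens pip pp pn x x') * indicator A (x, x') \<partial>M)"
      by (intro nn_integral_cong pointwise[OF p0 p1] pp0 pn0 x) 
    finally show "(\<Sum>y\<in>{1,-1}. ?f (x,y) * (\<integral>\<^sup>+ x'. (\<Sum>y'\<in>{1,-1}. ?f (x',y') * indicator ?B ((x,y),(x',y'))) \<partial>M))
        = (\<integral>\<^sup>+ x'. ennreal (q_dens pip pp pn x x') * indicator A (x, x') \<partial>M)" .
  qed
  also have "\<dots> = (\<integral>\<^sup>+ z. ennreal (q_dens pip pp pn (fst z) (snd z)) * indicator A z \<partial>(M \<Otimes>\<^sub>M M))"
  proof -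
    interpret M: sigma_finite_measure M by (rule sf)
    have "(\<lambda>z. ennreal (q_dens pip pp pn (fst z) (snd z)) * indicator A z) \<in> borel_measurable (M \<Otimes>\<^sub>M M)"
      using mp mn A unfolding q_dens_def by measurable
    from M.nn_integral_fst[OF this] show ?thesis by simp
  qed
  finally show ?thesis .
qed


lemma ennr2:
  fixes a b c d :: real
  assumes "0 \<le> a" "0 \<le> b" "0 \<le> c" "0 \<le> d"
  shows "ennreal (a * b + c * d) = ennreal a * ennreal b + ennreal c * ennreal d"
  using assms by (simp add: ennreal_plus ennreal_mult)

lemma total:
  assumes sf: "sigma_finite_measure M" and mp: "pp \<in> borel_measurable M" and mn: "pn \<in> borel_measurable M"
    and p0: "0 \<le> pip" and p1: "pip \<le> 1"
    and pp0: "\<And>x. x \<in> space M \<Longrightarrow> 0 \<le> pp x" and pn0: "\<And>x. x \<in> space M \<Longrightarrow> 0 \<le> pn x"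
    and ip: "(\<integral>\<^sup>+ x. ennreal (pp x) \<partial>M) = 1" and ineg: "(\<integral>\<^sup>+ x. ennreal (pn x) \<partial>M) = 1"
  shows "(\<integral>\<^sup>+ z. ennreal (q_dens pip pp pn (fst z) (snd z)) \<partial>(M \<Otimes>\<^sub>M M))
     = ennreal (pip^2 + (1 - pip)^2 + pip * (1 - pip))"
proof -
  interpret M: sigma_finite_measure M by (rule sf)
  have "(\<lambda>z. ennreal (q_dens pip pp pn (fst z) (snd z))) \<in> borel_measurable (M \<Otimes>\<^sub>M M)"
    using mp mn unfolding q_dens_def by measurable
  from M.nn_integral_fst[OF this]
  have "(\<integral>\<^sup>+ z. ennreal (q_dens pip pp pn (fst z) (snd z)) \<partial>(M \<Otimes>\<^sub>M M))
      = (\<integral>\<^sup>+ x. \<integral>\<^sup>+ x'. ennreal (q_dens pip pp pn x x') \<partial>M \<partial>M)" by simp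
  also have "\<dots> = (\<integral>\<^sup>+ x. ennreal pip * ennreal (pp x) + ennreal ((1 - pip)^2) * ennreal (pn x) \<partial>M)"
  proof (rule nn_integral_cong)
    fix x assume x: "x \<in> space M"
    have "(\<integral>\<^sup>+ x'. ennreal (q_dens pip pp pn x x') \<partial>M)
        = (\<integral>\<^sup>+ x'. ennreal (pip^2 * pp x) * ennreal (pp x') + ennreal ((1-pip)^2 * pn x + pip * (1 - pip) * pp x) * ennreal (pn x') \<partial>M)"
    proof (rule nn_integral_cong)
      fix x' assume x': "x' \<in> space M"
      have eq: "q_dens pip pp pn x x' = (pip^2 * pp x) * pp x' + ((1-pip)^2 * pn x + pip * (1 - pip) * pp x) * pn x'"
        by (simp add: q_dens_def algebra_simps)
      show "ennreal (q_dens pip pp pn x x') = ennreal (pip^2 * pp x) * ennreal (pp x') + ennreal ((1-pip)^2 * pn x + pip * (1 - pip) * pp x) * ennreal (pn x')"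
        unfolding eq using pp0[OF x] pn0[OF x] pp0[OF x'] pn0[OF x'] p0 p1
        by (intro ennr2) simp_all
    qed
    also have "\<dots> = ennreal (pip^2 * pp x) + ennreal ((1-pip)^2 * pn x + pip * (1 - pip) * pp x)"
      using mp mn by (simp add: nn_integral_add nn_integral_cmult ip ineg)
    also have "\<dots> = ennreal pip * ennreal (pp x) + ennreal ((1 - pip)^2) * ennreal (pn x)"
    proof -
      have e: "pip^2 * pp x + ((1-pip)^2 * pn x + pip * (1 - pip) * pp x) = pip * pp x + (1 - pip)^2 * pn x"
        by (simp add: power2_eq_square algebra_simps)
      have "ennreal (pip^2 * pp x) + ennreal ((1-pip)^2 * pn x + pip * (1 - pip) * pp x) = ennreal (pip^2 * pp x + ((1-pip)^2 * pn x + pip * (1 - pip) * pp x))"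
        using pp0[OF x] pn0[OF x] p0 p1 by (intro ennreal_plus[symmetric]) simp_all
      then have "ennreal (pip^2 * pp x) + ennreal ((1-pip)^2 * pn x + pip * (1 - pip) * pp x) = ennreal (pip * pp x + (1 - pip)^2 * pn x)"
        unfolding e .
      also have "\<dots> = ennreal pip * ennreal (pp x) + ennreal ((1 - pip)^2) * ennreal (pn x)"
        using pp0[OF x] pn0[OF x] p0 p1 by (intro ennr2) simp_all
      finally show ?thesis .
    qed
    finally show "(\<integral>\<^sup>+ x'. ennreal (q_dens pip pp pn x x') \<partial>M) = ennreal pip * ennreal (pp x) + ennreal ((1 - pip)^2) * ennreal (pn x)" .
  qed
  also have "\<dots> = ennreal pip + ennreal ((1 - pip)^2)"
    using mp mn by (simp add: nn_integral_add nn_integral_cmult ip ineg)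
  also have "\<dots> = ennreal (pip^2 + (1 - pip)^2 + pip * (1 - pip))"
  proof -
    have "ennreal pip + ennreal ((1 - pip)^2) = ennreal (pip + (1 - pip)^2)"
      using p0 by (intro ennreal_plus[symmetric]) simp_all
    also have "pip + (1 - pip)^2 = pip^2 + (1 - pip)^2 + pip * (1 - pip)"
      by (simp add: power2_eq_square algebra_simps)
    finally show ?thesis .
  qed
  finally show ?thesis .
qed


theorem theorem1:
  fixes M :: "'a measure" and pip :: real and pp pn :: "'a \<Rightarrow> real"
  assumes "sigma_finite_measure M"
    and "0 \<le> pip" and "pip \<le> 1"
    and "pp \<in> borel_measurable M" and "pn \<in> borel_measurable M"
    and "\<And>x. x \<in> space M \<Longrightarrow> 0 \<le> pp x"
    and "\<And>x. x \<in> space M \<Longrightarrow> 0 \<le> pn x"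
    and "(\<integral>\<^sup>+ x. ennreal (pp x) \<partial>M) = 1"
    and "(\<integral>\<^sup>+ x. ennreal (pn x) \<partial>M) = 1"
  shows "collected_pair_law M pip pp pn
           = density (M \<Otimes>\<^sub>M M) (\<lambda>(x, x'). ennreal (ptilde pip pp pn x x'))
       \<and> (\<forall>n. dataset_law M pip pp pn n
           = PiM {..<n} (\<lambda>_. density (M \<Otimes>\<^sub>M M) (\<lambda>(x, x'). ennreal (ptilde pip pp pn x x'))))"
proof -
  note sf = assms(1) and p0 = assms(2) and p1 = assms(3) and mp = assms(4) and mn = assms(5)
    and pp0 = assms(6) and pn0 = assms(7) and ip = assms(8) and ineg = assms(9)
  let ?TD = "two_draws M pip pp pn"
  let ?C = "collect_event M pip pp pn"
  let ?pi = "\<lambda>((x, y), x', y'). (x::'a, x')"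
  let ?q = "\<lambda>z. ennreal (q_dens pip pp pn (fst z) (snd z))"
  define Z where "Z = pip^2 + (1 - pip)^2 + pip * (1 - pip)"
  have Zpos: "0 < Z"
  proof -
    have "Z = (pip - 1/2)^2 + 3/4" unfolding Z_def by (simp add: power2_eq_square algebra_simps)
    moreover have "0 \<le> (pip - 1/2)^2" by simp
    ultimately show ?thesis by linarith
  qed
  have qm: "?q \<in> borel_measurable (M \<Otimes>\<^sub>M M)"
    using mp mn unfolding q_dens_def by measurable
  have EC: "emeasure ?TD ?C = ennreal Z"
  proof -
    have "?C = ?C \<inter> (?pi -` space (M \<Otimes>\<^sub>M M) \<inter> space ?TD)"
      by (auto simp: collect_event_def space_TD space_pair_measure)
    then have "emeasure ?TD ?C = (\<integral>\<^sup>+ z. ?q z * indicator (space (M \<Otimes>\<^sub>M M)) z \<partial>(M \<Otimes>\<^sub>M M))"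
      using Qlemma[OF sf mp mn p0 p1 pp0 pn0 sets.top] by simp
    also have "\<dots> = (\<integral>\<^sup>+ z. ?q z \<partial>(M \<Otimes>\<^sub>M M))"
      by (intro nn_integral_cong) simp
    also have "\<dots> = ennreal Z" unfolding Z_def by (rule total[OF sf mp mn p0 p1 pp0 pn0 ip ineg])
    finally show ?thesis .
  qed
  have main: "collected_pair_law M pip pp pn = density (M \<Otimes>\<^sub>M M) (\<lambda>(x, x'). ennreal (ptilde pip pp pn x x'))"
  proof (rule measure_eqI)
    show "sets (collected_pair_law M pip pp pn) = sets (density (M \<Otimes>\<^sub>M M) (\<lambda>(x, x'). ennreal (ptilde pip pp pn x x')))"
      by (simp add: collected_pair_law_def)
  next
    fix A assume "A \<in> sets (collected_pair_law M pip pp pn)"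
    then have A: "A \<in> sets (M \<Otimes>\<^sub>M M)" by (simp add: collected_pair_law_def)
    have pim: "?pi \<in> measurable (uniform_measure ?TD ?C) (M \<Otimes>\<^sub>M M)"
      using pi_meas by (simp cong: measurable_cong_sets)
    have "emeasure (collected_pair_law M pip pp pn) A = emeasure (uniform_measure ?TD ?C) (?pi -` A \<inter> space ?TD)"
      unfolding collected_pair_law_def using emeasure_distr[OF pim A] by simp
    also have "\<dots> = emeasure ?TD (?C \<inter> (?pi -` A \<inter> space ?TD)) / emeasure ?TD ?C"
      by (intro emeasure_uniform_measure C_sets measurable_sets[OF pi_meas A])
    also have "\<dots> = (\<integral>\<^sup>+ z. ?q z * indicator A z \<partial>(M \<Otimes>\<^sub>M M)) / ennreal Z"
      by (simp only: Qlemma[OF sf mp mn p0 p1 pp0 pn0 A] EC)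
    also have "\<dots> = (\<integral>\<^sup>+ z. ?q z * indicator A z / ennreal Z \<partial>(M \<Otimes>\<^sub>M M))"
      by (rule nn_integral_divide[symmetric]) (use qm A in measurable)
    also have "\<dots> = (\<integral>\<^sup>+ z. (\<lambda>(x, x'). ennreal (ptilde pip pp pn x x')) z * indicator A z \<partial>(M \<Otimes>\<^sub>M M))"
    proof (rule nn_integral_cong)
      fix z assume z: "z \<in> space (M \<Otimes>\<^sub>M M)"
      obtain x x' where zz: "z = (x, x')" by (cases z)
      have x: "x \<in> space M" "x' \<in> space M" using z zz by (auto simp: space_pair_measure)
      have q0: "0 \<le> q_dens pip pp pn x x'"
        unfolding q_dens_def using pp0[OF x(1)] pn0[OF x(1)] pp0[OF x(2)] pn0[OF x(2)] p0 p1
        by (intro add_nonneg_nonneg mult_nonneg_nonneg) simp_all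
      have "ennreal (ptilde pip pp pn x x') = ennreal (q_dens pip pp pn x x') / ennreal Z"
        unfolding ptilde_def Z_def[symmetric] using divide_ennreal[OF q0 Zpos] by simp
      then show "?q z * indicator A z / ennreal Z = (\<lambda>(x, x'). ennreal (ptilde pip pp pn x x')) z * indicator A z"
        by (simp add: zz ennreal_divide_times ennreal_times_divide mult.commute)
    qed
    also have "\<dots> = emeasure (density (M \<Otimes>\<^sub>M M) (\<lambda>(x, x'). ennreal (ptilde pip pp pn x x'))) A"
      by (rule emeasure_density[symmetric, OF _ A]) (use mp mn in \<open>unfold ptilde_def q_dens_def, measurable\<close>)
    finally show "emeasure (collected_pair_law M pip pp pn) A = emeasure (density (M \<Otimes>\<^sub>M M) (\<lambda>(x, x'). ennreal (ptilde pip pp pn x x'))) A" .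
  qed
  show ?thesis using main by (simp add: dataset_law_def)
qed

end
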